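(* Let $\mathfrak{n}$ be a complex simple Lie algebra of type $C_n$ ($n\ge3$) and let $\mathfrak{n}=\mathfrak{n}_{-3}\oplus\cdots\oplus\mathfrak{n}_3$ be the $|3|$-grading associated to $\Sigma_i=\{\alpha_i,\alpha_n\}$, where $1\le i<n$. Then there is no graded isomorphism between $\mathfrak{F}_{r,3}$ and $\mathfrak{n}_{-3}\oplus\mathfrak{n}_{-2}\oplus\mathfrak{n}_{-1}$ (for any positive integer $r$).
   Context: Simple roots of $C_n$ are labeled in the standard way, with highest root $2\alpha_1+\cdots+2\alpha_{n-1}+\alpha_n$. For a root $\alpha=\sum a_l\alpha_l$ and a set $\Sigma$ of simple roots, $ht_\Sigma(\alpha)=\sum_{\alpha_l\in\Sigma}a_l$; the grading associated to $\Sigma$ is $\mathfrak{n}_m=\bigoplus_{ht_\Sigma(\alpha)=m}\mathfrak{g}_\alpha$ ($m\ne0$), $\mathfrak{n}_0=\mathfrak{h}\oplus\bigoplus_{ht_\Sigma(\alpha)=0}\mathfrak{g}_\alpha$, a $|3|$-grading since the highest root has $\Sigma_i$-height $3$. $\mathfrak{F}_{r,3}$ is the free nilpotent Lie algebra of step $3$ on $r$ generators with canonical grading $\mathfrak{f}_{-1}$ (span of generators), $\mathfrak{f}_{-2}=[\mathfrak{f}_{-1},\mathfrak{f}_{-1}]$, $\mathfrak{f}_{-3}=[\mathfrak{f}_{-1},\mathfrak{f}_{-2}]$; a graded isomorphism is a Lie algebra isomorphism mapping $\mathfrak{f}_{-m}$ onto $\mathfrak{n}_{-m}$ for $m=1,2,3$.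 *)

theory Defs
  imports Complex_Main "HOL-Library.Function_Algebras"
begin

text \<open>Vectors are functions into complex, with pointwise addition
 (Function_Algebras) and the following complex scalar multiplication.\<close>

definition csc :: "complex \<Rightarrow> ('a \<Rightarrow> complex) \<Rightarrow> ('a \<Rightarrow> complex)" where
  "csc c v = (\<lambda>x. c * v x)"

definition cspan :: "('a \<Rightarrow> complex) set \<Rightarrow> ('a \<Rightarrow> complex) set" where
  "cspan S = {v. \<exists>F coef. finite F \<and> F \<subseteq> S \<and> v = (\<Sum>u\<in>F. csc (coef u) u)}"

text \<open>2n x 2n complex matrices, as functions on index pairs, entries outside
 {0..<2n} x {0..<2n} being zero.\<close>

type_synonym cmat = "nat \<times> nat \<Rightarrow> complex"

definition mmul :: "nat \<Rightarrow> cmat \<Rightarrow> cmat \<Rightarrow> cmat" where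
  "mmul n A B = (\<lambda>(i,j). if i < 2*n \<and> j < 2*n then (\<Sum>k<2*n. A (i,k) * B (k,j)) else 0)"

definition mbr :: "nat \<Rightarrow> cmat \<Rightarrow> cmat \<Rightarrow> cmat" where
  "mbr n A B = mmul n A B - mmul n B A"

definition mtransp :: "cmat \<Rightarrow> cmat" where
  "mtransp A = (\<lambda>(i,j). A (j,i))"

definition Jmat :: "nat \<Rightarrow> cmat" where
  "Jmat n = (\<lambda>(i,j). if i < n \<and> j = i + n then 1
                      else if n \<le> i \<and> i < 2*n \<and> j = i - n then -1 else 0)"

definition sp :: "nat \<Rightarrow> cmat set" where
  "sp n = {X. (\<forall>i j. \<not> (i < 2*n \<and> j < 2*n) \<longrightarrow> X (i,j) = 0) \<and>
              mmul n (mtransp X) (Jmat n) + mmul n (Jmat n) X = 0}"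

text \<open>Cartan subalgebra: the diagonal matrices in sp(2n), i.e. diag(t_1..t_n,-t_1..-t_n).\<close>
definition cartan :: "nat \<Rightarrow> cmat set" where
  "cartan n = {H \<in> sp n. \<forall>i j. i \<noteq> j \<longrightarrow> H (i,j) = 0}"

text \<open>Simple roots (standard labelling, 1-indexed): alpha_l = e_l - e_(l+1) for l < n,
 alpha_n = 2 e_n, where e_l(H) = H(l-1,l-1). Highest root 2 e_1 = 2alpha_1+...+2alpha_(n-1)+alpha_n.\<close>
definition simple_root :: "nat \<Rightarrow> nat \<Rightarrow> cmat \<Rightarrow> complex" where
  "simple_root n l H = (if l < n then H (l-1, l-1) - H (l, l) else 2 * H (n-1, n-1))"

text \<open>A weight is given by its integer coefficients a_1..a_n w.r.t. the simple roots.\<close>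
definition weight_fun :: "nat \<Rightarrow> (nat \<Rightarrow> int) \<Rightarrow> cmat \<Rightarrow> complex" where
  "weight_fun n a H = (\<Sum>l\<in>{1..n}. of_int (a l) * simple_root n l H)"

definition root_space :: "nat \<Rightarrow> (nat \<Rightarrow> int) \<Rightarrow> cmat set" where
  "root_space n a = {X \<in> sp n. \<forall>H \<in> cartan n. mbr n H X = csc (weight_fun n a H) X}"

definition is_root :: "nat \<Rightarrow> (nat \<Rightarrow> int) \<Rightarrow> bool" where
  "is_root n a \<longleftrightarrow> (\<forall>l. l \<notin> {1..n} \<longrightarrow> a l = 0) \<and> (\<exists>l \<in> {1..n}. a l \<noteq> 0)
                   \<and> root_space n a \<noteq> {0}"

definition ht :: "nat set \<Rightarrow> (nat \<Rightarrow> int) \<Rightarrow> int" where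
  "ht \<Sigma> a = (\<Sum>l\<in>\<Sigma>. a l)"

text \<open>Graded component n_m for m \<noteq> 0 of the grading associated to \<Sigma>.\<close>
definition grade :: "nat \<Rightarrow> nat set \<Rightarrow> int \<Rightarrow> cmat set" where
  "grade n \<Sigma> m = cspan (\<Union> {root_space n a | a. is_root n a \<and> ht \<Sigma> a = m})"

definition neg_part :: "nat \<Rightarrow> nat set \<Rightarrow> cmat set" where
  "neg_part n \<Sigma> = cspan (grade n \<Sigma> (-1) \<union> grade n \<Sigma> (-2) \<union> grade n \<Sigma> (-3))"

text \<open>Realised as the Lie subalgebra generated by the letters inside the free associative
 algebra on r letters truncated above degree 3 (elements: coefficient functions on words).\<close>

type_synonym tens = "nat list \<Rightarrow> complex"

definition tmul :: "tens \<Rightarrow> tens \<Rightarrow> tens" where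
  "tmul p q = (\<lambda>w. if length w \<le> 3 then (\<Sum>k\<le>length w. p (take k w) * q (drop k w)) else 0)"

definition tbr :: "tens \<Rightarrow> tens \<Rightarrow> tens" where
  "tbr p q = tmul p q - tmul q p"

definition gen :: "nat \<Rightarrow> tens" where
  "gen a = (\<lambda>w. if w = [a] then 1 else 0)"

definition f1 :: "nat \<Rightarrow> tens set" where
  "f1 r = cspan {gen a | a. a < r}"

definition f2 :: "nat \<Rightarrow> tens set" where
  "f2 r = cspan {tbr (gen a) (gen b) | a b. a < r \<and> b < r}"

definition f3 :: "nat \<Rightarrow> tens set" where
  "f3 r = cspan {tbr (gen a) (tbr (gen b) (gen c)) | a b c. a < r \<and> b < r \<and> c < r}"

definition free_nil3 :: "nat \<Rightarrow> tens set" where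
  "free_nil3 r = cspan (f1 r \<union> f2 r \<union> f3 r)"

definition graded_iso :: "nat \<Rightarrow> nat set \<Rightarrow> nat \<Rightarrow> (tens \<Rightarrow> cmat) \<Rightarrow> bool" where
  "graded_iso n \<Sigma> r \<phi> \<longleftrightarrow>
     (\<forall>x\<in>free_nil3 r. \<forall>y\<in>free_nil3 r. \<phi> (x + y) = \<phi> x + \<phi> y) \<and>
     (\<forall>c. \<forall>x\<in>free_nil3 r. \<phi> (csc c x) = csc c (\<phi> x)) \<and>
     bij_betw \<phi> (free_nil3 r) (neg_part n \<Sigma>) \<and>
     (\<forall>x\<in>free_nil3 r. \<forall>y\<in>free_nil3 r. \<phi> (tbr x y) = mbr n (\<phi> x) (\<phi> y)) \<and>
     \<phi> ` f1 r = grade n \<Sigma> (-1) \<and>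
     \<phi> ` f2 r = grade n \<Sigma> (-2) \<and>
     \<phi> ` f3 r = grade n \<Sigma> (-3)"

end

theory Submission
  imports Defs
begin


lemma sum_fun_app: "(sum f A) x = sum (\<lambda>a. f a x) A"
  by (induction A rule: infinite_finite_induct) auto

definition Em :: "nat \<Rightarrow> nat \<Rightarrow> cmat" where
  "Em p q = (\<lambda>(i,j). if i = p \<and> j = q then 1 else 0)"

lemma ifmul1: "(if c then (1::complex) else 0) * x = (if c then x else 0)" by simp
lemma ifmul2: "x * (if c then (1::complex) else 0) = (if c then x else 0)" by simp

lemma mmul_E_left: "mmul n (Em p q) B = (\<lambda>(i,j). if i<2*n \<and> j<2*n \<and> i=p \<and> q<2*n then B(q,j) else 0)"
  unfolding mmul_def Em_def
  by (auto simp: fun_eq_iff ifmul1 sum.delta cong: if_cong)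

lemma mmul_E_right: "mmul n A (Em p q) = (\<lambda>(i,j). if i<2*n \<and> j<2*n \<and> j=q \<and> p<2*n then A(i,p) else 0)"
  unfolding mmul_def Em_def
  by (auto simp: fun_eq_iff ifmul2 sum.delta' cong: if_cong)

lemma mmul_diff_left: "mmul n (A - B) C = mmul n A C - mmul n B C"
  unfolding mmul_def by (auto simp: fun_eq_iff algebra_simps sum_subtractf)

lemma mmul_diff_right: "mmul n C (A - B) = mmul n C A - mmul n C B"
  unfolding mmul_def by (auto simp: fun_eq_iff algebra_simps sum_subtractf)

lemma mtransp_diff: "mtransp (A - B) = mtransp A - mtransp B"
  unfolding mtransp_def by (auto simp: fun_eq_iff)

lemma mtransp_E: "mtransp (Em p q) = Em q p"
  unfolding mtransp_def Em_def by (auto simp: fun_eq_iff)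

definition Rv :: "nat \<Rightarrow> nat \<Rightarrow> nat \<Rightarrow> cmat" where
  "Rv n a b = Em (b-1) (a-1) - Em (n+a-1) (n+b-1)"

lemma Jrow_lo: "k<n \<Longrightarrow> Jmat n (k,j) = (if j = k+n then 1 else 0)"
  by (auto simp: Jmat_def)
lemma Jrow_hi: "k<n \<Longrightarrow> Jmat n (n+k,j) = (if j = k then -1 else 0)"
  by (auto simp: Jmat_def)
lemma Jcol_lo: "k<n \<Longrightarrow> i < 2*n \<Longrightarrow> Jmat n (i,k) = (if i = n+k then -1 else 0)"
  by (auto simp: Jmat_def)
lemma Jcol_hi: "k<n \<Longrightarrow> Jmat n (i,n+k) = (if i = k then 1 else 0)"
  by (auto simp: Jmat_def)

lemma Rv_sp: assumes "1 \<le> a" "a < b" "b \<le> n" shows "Rv n a b \<in> sp n"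
proof -
  obtain a' b' where ab: "a = Suc a'" "b = Suc b'" using assms by (cases a; cases b) auto
  have lt: "a' < b'" "b' < n" using assms ab by auto
  have e: "n + a - 1 = n + a'" "n + b - 1 = n + b'" "a - 1 = a'" "b - 1 = b'" using ab by auto
  show ?thesis
  unfolding sp_def Rv_def e mem_Collect_eq
  apply (simp only: mtransp_diff mtransp_E mmul_diff_left mmul_diff_right mmul_E_left mmul_E_right)
  apply (intro conjI allI impI)
  subgoal for i j using lt by (auto simp: Em_def)
  apply (rule ext)
  apply clarify
  subgoal for i j using lt by (simp add: Jrow_lo Jrow_hi Jcol_lo Jcol_hi)
  done
qed


lemma cartan_neg: assumes "H \<in> cartan n" "k < n" shows "H (n+k, n+k) = - H (k,k)"
proof -
  have H: "H \<in> sp n" "\<And>i j. i \<noteq> j \<Longrightarrow> H (i,j) = 0" using assms by (auto simp: cartan_def)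
  have eq: "mmul n (mtransp H) (Jmat n) (k, n+k) + mmul n (Jmat n) H (k, n+k) = 0"
    using H(1) unfolding sp_def by (metis (mono_tags, lifting) mem_Collect_eq plus_fun_apply zero_fun_apply)
  have 1: "mmul n (mtransp H) (Jmat n) (k, n+k) = H (k,k)"
    using assms(2) unfolding mmul_def mtransp_def by (simp add: Jcol_hi ifmul2 sum.delta' cong: if_cong)
  have 2: "mmul n (Jmat n) H (k, n+k) = H (n+k,n+k)"
    using assms(2) unfolding mmul_def by (simp add: Jrow_lo ifmul1 sum.delta add.commute cong: if_cong)
  show ?thesis using eq 1 2 by (simp add: add_eq_0_iff)
qed

lemma mbr_E: assumes "H \<in> cartan n" "p < 2*n" "q < 2*n"
  shows "mbr n H (Em p q) = csc (H (p,p) - H (q,q)) (Em p q)"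
proof -
  have H: "\<And>i j. i \<noteq> j \<Longrightarrow> H (i,j) = 0" using assms by (auto simp: cartan_def)
  show ?thesis unfolding mbr_def mmul_E_left mmul_E_right
    using assms(2,3) H by (auto simp: fun_eq_iff csc_def Em_def)
qed

lemma mbr_diff: "mbr n H (A - B) = mbr n H A - mbr n H B"
  unfolding mbr_def mmul_diff_left mmul_diff_right by simp

lemma csc_diff: "csc c (A - B) = csc c A - csc c B"
  unfolding csc_def by (auto simp: fun_eq_iff algebra_simps)

definition wa :: "nat \<Rightarrow> nat \<Rightarrow> nat \<Rightarrow> int" where
  "wa a b = (\<lambda>l. if a \<le> l \<and> l < b then -1 else 0)"

lemma tele: fixes a b :: nat and H :: cmat
  shows "a < b \<Longrightarrow> (\<Sum>l\<in>{a..<b}. (H (l-1,l-1) - H (l,l))) = H (a-1,a-1) - H (b-1,b-1)"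
proof (induction b)
  case 0 then show ?case by simp
next
  case (Suc m) then show ?case
    by (cases "a = m") (auto simp: sum.atLeastLessThan_Suc)
qed


lemma weight_wa: assumes "1 \<le> a" "a < b" "b \<le> n"
  shows "weight_fun n (wa a b) H = H (b-1,b-1) - H (a-1,a-1)"
proof -
  have "weight_fun n (wa a b) H = (\<Sum>l\<in>{1..n}. if l \<in> {a..<b} then - (H (l-1,l-1) - H (l,l)) else 0)"
    unfolding weight_fun_def
    by (rule sum.cong) (use assms in \<open>auto simp: wa_def simple_root_def\<close>)
  also have "\<dots> = (\<Sum>l\<in>{1..n} \<inter> {a..<b}. - (H (l-1,l-1) - H (l,l)))"
    by (simp only: sum.inter_restrict[OF finite_atLeastAtMost])
  also have "{1..n} \<inter> {a..<b} = {a..<b}" using assms by auto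
  also have "(\<Sum>l\<in>{a..<b}. - (H (l-1,l-1) - H (l,l))) = - (H (a-1,a-1) - H (b-1,b-1))"
    unfolding sum_negf using tele[of a b H] assms by simp
  finally show ?thesis by simp
qed

lemma Rv_root: assumes "1 \<le> a" "a < b" "b \<le> n"
  shows "Rv n a b \<in> root_space n (wa a b)"
  unfolding root_space_def
proof (intro CollectI conjI ballI)
  show "Rv n a b \<in> sp n" using Rv_sp assms .
  fix H assume H: "H \<in> cartan n"
  have n1: "H (n+a-Suc 0, n+a-Suc 0) = - H (a-Suc 0,a-Suc 0)" using cartan_neg[OF H, of "a-1"] assms
    by (simp add: Nat.add_diff_assoc)
  have n2: "H (n+b-Suc 0, n+b-Suc 0) = - H (b-Suc 0,b-Suc 0)" using cartan_neg[OF H, of "b-1"] assms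
    by (simp add: Nat.add_diff_assoc)
  show "mbr n H (Rv n a b) = csc (weight_fun n (wa a b) H) (Rv n a b)"
    unfolding Rv_def mbr_diff weight_wa[OF assms] csc_diff
    using assms by (simp add: mbr_E[OF H] n1 n2)
qed

lemma Rv_nz: assumes "1 \<le> a" "a < b" "b \<le> n" shows "Rv n a b (b-1, a-1) = 1"
  using assms by (simp add: Rv_def Em_def)

lemma Rv_grade: assumes "1 \<le> a" "a \<le> i" "i < b" "b \<le> n"
  shows "Rv n a b \<in> grade n {i, n} (-1)"
proof -
  have r: "is_root n (wa a b)"
    unfolding is_root_def
  proof (intro conjI)
    show "\<forall>l. l \<notin> {1..n} \<longrightarrow> wa a b l = 0" using assms by (auto simp: wa_def)
    show "\<exists>l\<in>{1..n}. wa a b l \<noteq> 0" using assms by (intro bexI[of _ a]) (auto simp: wa_def)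
    show "root_space n (wa a b) \<noteq> {0}"
      using Rv_root[of a b n] Rv_nz[of a b n] assms by (metis le_less_trans singletonD zero_fun_apply zero_neq_one)
  qed
  have h: "ht {i, n} (wa a b) = -1" using assms by (simp add: ht_def wa_def)
  have "Rv n a b \<in> \<Union> {root_space n a' | a'. is_root n a' \<and> ht {i,n} a' = -1}"
    using r h Rv_root[of a b n] assms by auto
  then show ?thesis unfolding grade_def cspan_def
    by (intro CollectI exI[of _ "{Rv n a b}"] exI[of _ "\<lambda>_. 1"]) (auto simp: csc_def)
qed





lemma mmul_EE: "mmul n (Em p q) (Em r s) = (if q = r \<and> p<2*n \<and> q<2*n \<and> s<2*n then Em p s else 0)"
  unfolding mmul_E_left by (auto simp: fun_eq_iff Em_def)

lemma Rv_comm1: assumes "3 \<le> n" shows "mbr n (Rv n 1 n) (Rv n 1 (n-1)) = 0"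
proof -
  obtain m where n: "n = Suc (Suc (Suc m))" using assms by (cases n; auto; rename_tac k; case_tac k; auto; rename_tac j; case_tac j; auto)
  show ?thesis unfolding mbr_def Rv_def
    apply (simp only: mmul_diff_left mmul_diff_right mmul_EE)
    unfolding n by simp
qed

lemma Rv_comm2: assumes "3 \<le> n" shows "mbr n (Rv n 1 n) (Rv n 2 n) = 0"
proof -
  obtain m where n: "n = Suc (Suc (Suc m))" using assms by (cases n; auto; rename_tac k; case_tac k; auto; rename_tac j; case_tac j; auto)
  show ?thesis unfolding mbr_def Rv_def
    apply (simp only: mmul_diff_left mmul_diff_right mmul_EE)
    unfolding n by simp
qed

lemma Rv_np1: assumes "3 \<le> n" shows "Rv n 1 (n-1) \<noteq> csc c (Rv n 1 n)"
proof
  obtain m where n: "n = Suc (Suc (Suc m))" using assms by (cases n; auto; rename_tac k; case_tac k; auto; rename_tac j; case_tac j; auto)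
  assume "Rv n 1 (n-1) = csc c (Rv n 1 n)"
  then have "Rv n 1 (n-1) (Suc m,0) = csc c (Rv n 1 n) (Suc m,0)" by simp
  then show False unfolding n by (simp add: Rv_def Em_def csc_def)
qed

lemma Rv_np2: assumes "3 \<le> n" shows "Rv n 2 n \<noteq> csc c (Rv n 1 n)"
proof
  obtain m where n: "n = Suc (Suc (Suc m))" using assms by (cases n; auto; rename_tac k; case_tac k; auto; rename_tac j; case_tac j; auto)
  assume "Rv n 2 n = csc c (Rv n 1 n)"
  then have "Rv n 2 n (n-1,1) = csc c (Rv n 1 n) (n-1,1)" by simp
  then show False unfolding n by (simp add: Rv_def Em_def csc_def)
qed

lemma Rv_nz1: assumes "3 \<le> n" shows "Rv n 1 n \<noteq> 0"
proof
  assume "Rv n 1 n = 0"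
  then have "Rv n 1 n (n-1,0) = 0" by simp
  then show False using Rv_nz[of 1 n n] assms by simp
qed




lemma csc_apply: "csc c v x = c * v x" by (simp add: csc_def)

lemma cspan_base: "s \<in> S \<Longrightarrow> s \<in> cspan S"
  unfolding cspan_def by (intro CollectI exI[of _ "{s}"] exI[of _ "\<lambda>_. 1"]) (auto simp: csc_def)

lemma cspan_0: "0 \<in> cspan S"
  unfolding cspan_def by (intro CollectI exI[of _ "{}"]) auto

lemma csc_0: "csc 0 u = 0" by (rule ext) (simp add: csc_def)

lemma cspan_add: assumes "p \<in> cspan S" "q \<in> cspan S" shows "p + q \<in> cspan S"
proof -
  obtain F1 c1 where 1: "finite F1" "F1 \<subseteq> S" "p = (\<Sum>u\<in>F1. csc (c1 u) u)" using assms(1) unfolding cspan_def by auto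
  obtain F2 c2 where 2: "finite F2" "F2 \<subseteq> S" "q = (\<Sum>u\<in>F2. csc (c2 u) u)" using assms(2) unfolding cspan_def by auto
  define d1 where "d1 u = (if u \<in> F1 then c1 u else 0)" for u
  define d2 where "d2 u = (if u \<in> F2 then c2 u else 0)" for u
  have e1: "p = (\<Sum>u\<in>F1 \<union> F2. csc (d1 u) u)"
  proof -
    have "p = (\<Sum>u\<in>F1. csc (d1 u) u)" unfolding 1(3) by (rule sum.cong) (simp_all add: d1_def)
    also have "\<dots> = (\<Sum>u\<in>F1 \<union> F2. csc (d1 u) u)"
      by (rule sum.mono_neutral_left) (use 1 2 in \<open>simp_all add: d1_def csc_0\<close>)
    finally show ?thesis .
  qed
  have e2: "q = (\<Sum>u\<in>F1 \<union> F2. csc (d2 u) u)"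
  proof -
    have "q = (\<Sum>u\<in>F2. csc (d2 u) u)" unfolding 2(3) by (rule sum.cong) (simp_all add: d2_def)
    also have "\<dots> = (\<Sum>u\<in>F1 \<union> F2. csc (d2 u) u)"
      by (rule sum.mono_neutral_left) (use 1 2 in \<open>simp_all add: d2_def csc_0\<close>)
    finally show ?thesis .
  qed
  have "p + q = (\<Sum>u\<in>F1 \<union> F2. csc (d1 u + d2 u) u)"
    unfolding e1 e2 sum.distrib[symmetric] by (rule sum.cong) (simp_all add: csc_def fun_eq_iff algebra_simps)
  moreover have "finite (F1 \<union> F2)" "F1 \<union> F2 \<subseteq> S" using 1 2 by auto
  ultimately show ?thesis unfolding cspan_def
    by (intro CollectI exI[of _ "F1 \<union> F2"] exI[of _ "\<lambda>u. d1 u + d2 u"]) simp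
qed

lemma cspan_csc: assumes "p \<in> cspan S" shows "csc c p \<in> cspan S"
proof -
  obtain F1 c1 where 1: "finite F1" "F1 \<subseteq> S" "p = (\<Sum>u\<in>F1. csc (c1 u) u)" using assms(1) unfolding cspan_def by auto
  have "csc c p = (\<Sum>u\<in>F1. csc (c * c1 u) u)"
    unfolding 1(3) by (auto simp: fun_eq_iff csc_def sum_fun_app sum_distrib_left mult.assoc)
  then show ?thesis unfolding cspan_def using 1
    by (intro CollectI exI[of _ F1] exI[of _ "\<lambda>u. c * c1 u"]) simp
qed

lemma cspan_sum: assumes "\<And>a. a \<in> A \<Longrightarrow> f a \<in> cspan S" shows "sum f A \<in> cspan S"
  using assms by (induction A rule: infinite_finite_induct) (auto simp: cspan_0 cspan_add)

lemma f1_supp: assumes "p \<in> f1 r" "\<not> (\<exists>a<r. w = [a])" shows "p w = 0"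
proof -
  obtain F c where 1: "finite F" "F \<subseteq> {gen a | a. a < r}" "p = (\<Sum>u\<in>F. csc (c u) u)"
    using assms(1) unfolding f1_def cspan_def by auto
  have "p w = (\<Sum>u\<in>F. c u * u w)" unfolding 1(3) by (simp add: sum_fun_app csc_def)
  also have "\<dots> = 0" by (rule sum.neutral) (use 1(2) assms(2) in \<open>auto simp: gen_def\<close>)
  finally show ?thesis .
qed

lemma f1_expand: assumes "p \<in> f1 r" shows "p = (\<Sum>a<r. csc (p [a]) (gen a))"
proof
  fix w
  show "p w = (\<Sum>a<r. csc (p [a]) (gen a)) w"
  proof (cases "\<exists>a<r. w = [a]")
    case True
    then obtain a where a: "a < r" "w = [a]" by auto
    then show ?thesis by (simp add: sum_fun_app csc_def gen_def ifmul2 sum.delta)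
  next
    case False
    then show ?thesis using f1_supp[OF assms False] by (auto simp: sum_fun_app csc_def gen_def intro!: sum.neutral)
  qed
qed

lemma tmul_sum_left: "tmul (sum f A) q = sum (\<lambda>a. tmul (f a) q) A"
proof
  fix w show "tmul (sum f A) q w = sum (\<lambda>a. tmul (f a) q) A w"
    unfolding sum_fun_app
    by (cases "length w \<le> 3") (simp_all add: tmul_def sum_fun_app sum_distrib_right, rule sum.swap)
qed

lemma tmul_sum_right: "tmul q (sum f A) = sum (\<lambda>a. tmul q (f a)) A"
proof
  fix w show "tmul q (sum f A) w = sum (\<lambda>a. tmul q (f a)) A w"
    unfolding sum_fun_app
    by (cases "length w \<le> 3") (simp_all add: tmul_def sum_fun_app sum_distrib_left, rule sum.swap)
qed

lemma tmul_csc_left: "tmul (csc c p) q = csc c (tmul p q)"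
  by (auto simp: tmul_def fun_eq_iff csc_def sum_distrib_left mult.assoc)

lemma tmul_csc_right: "tmul q (csc c p) = csc c (tmul q p)"
  by (auto simp: tmul_def fun_eq_iff csc_def sum_distrib_left algebra_simps)

lemma csc_sum: "csc c (sum f B) = sum (\<lambda>b. csc c (f b)) B"
  by (rule ext) (simp add: csc_def sum_fun_app sum_distrib_left)

lemma csc_csc: "csc c (csc d T) = csc (c * d) T"
  by (rule ext) (simp add: csc_def)

lemma tmul_bilin: "tmul (\<Sum>a\<in>A. csc (c a) (g a)) (\<Sum>b\<in>B. csc (d b) (h b))
   = (\<Sum>a\<in>A. \<Sum>b\<in>B. csc (c a * d b) (tmul (g a) (h b)))"
  apply (subst tmul_sum_left)
  apply (simp only: tmul_csc_left tmul_sum_right tmul_csc_right csc_sum csc_csc)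
  apply (simp add: mult.commute)
  done

lemma tbr_expand: "tbr (\<Sum>a\<in>A. csc (c a) (g a)) (\<Sum>b\<in>B. csc (d b) (h b))
   = (\<Sum>a\<in>A. \<Sum>b\<in>B. csc (c a * d b) (tbr (g a) (h b)))"
proof -
  have S: "(\<Sum>b\<in>B. \<Sum>a\<in>A. csc (d b * c a) (tmul (h b) (g a))) = (\<Sum>a\<in>A. \<Sum>b\<in>B. csc (d b * c a) (tmul (h b) (g a)))"
    by (rule sum.swap)
  show ?thesis
    unfolding tbr_def tmul_bilin S sum_subtractf[symmetric]
    by (rule sum.cong[OF refl], rule sum.cong[OF refl]) (simp add: csc_diff mult.commute)
qed

lemma tbr_f1_in: assumes "x \<in> f1 r" "y \<in> f1 r" shows "tbr x y \<in> free_nil3 r"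
proof -
  have g: "tbr (gen a) (gen b) \<in> free_nil3 r" if "a < r" "b < r" for a b
    unfolding free_nil3_def
    by (rule cspan_base, rule UnI1, rule UnI2, unfold f2_def, rule cspan_base) (use that in auto)
  have "tbr x y = (\<Sum>a<r. \<Sum>b<r. csc (x [a] * y [b]) (tbr (gen a) (gen b)))"
    by (subst f1_expand[OF assms(1)], subst f1_expand[OF assms(2)]) (rule tbr_expand)
  also have "\<dots> \<in> free_nil3 r"
    unfolding free_nil3_def by (intro cspan_sum cspan_csc g[unfolded free_nil3_def]) auto
  finally show ?thesis .
qed

lemma tmul2: "tmul p q [a,b] = p [] * q [a,b] + p [a] * q [b] + p [a,b] * q []"
  by (simp add: tmul_def numeral_2_eq_2 atMost_Suc)



lemma f1_dep: assumes "x \<in> f1 r" "y \<in> f1 r" "tbr x y = 0" "x \<noteq> 0"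
  shows "\<exists>c. y = csc c x"
proof -
  obtain w where w: "x w \<noteq> 0" using assms(4) by (auto simp: fun_eq_iff)
  then obtain a where a: "a < r" "w = [a]" using f1_supp[OF assms(1)] by blast
  have z: "\<And>p v. p \<in> f1 r \<Longrightarrow> length v \<noteq> 1 \<Longrightarrow> p v = 0"
    by (rule f1_supp) auto
  have br: "x [a] * y [b] = y [a] * x [b]" for b
  proof -
    have "tbr x y [a,b] = 0" using assms(3) by simp
    have 1: "x [] = 0" "y [] = 0" "x [a,b] = 0" "y [a,b] = 0"
      using z[OF assms(1), of "[]"] z[OF assms(2), of "[]"] z[OF assms(1), of "[a,b]"] z[OF assms(2), of "[a,b]"]
      by auto
    have "tmul x y [a,b] = x [a] * y [b]" unfolding tmul2 1 by simp
    moreover have "tmul y x [a,b] = y [a] * x [b]" unfolding tmul2 1 by simp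
    ultimately show ?thesis using \<open>tbr x y [a,b] = 0\<close> unfolding tbr_def minus_apply by simp
  qed
  show ?thesis
  proof (intro exI[of _ "y [a] / x [a]"] ext)
    fix v
    show "y v = csc (y [a] / x [a]) x v"
    proof (cases "\<exists>b<r. v = [b]")
      case True
      then obtain b where "v = [b]" by auto
      have xa: "x [a] \<noteq> 0" using w a by simp
      have "y [a] / x [a] * x [b] = (y [a] * x [b]) / x [a]" by simp
      also have "\<dots> = (x [a] * y [b]) / x [a]" by (simp only: br[of b])
      also have "\<dots> = y [b]" using xa by (rule nonzero_mult_div_cancel_left)
      finally show ?thesis using \<open>v = [b]\<close> by (simp add: csc_def)
    next
      case False
      then show ?thesis using f1_supp[OF assms(1) False] f1_supp[OF assms(2) False] by (simp add: csc_def)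
    qed
  qed
qed




lemma no_iso_generic:
  assumes X: "X \<in> grade n S (-1)" and Y: "Y \<in> grade n S (-1)"
    and c: "mbr n X Y = 0" and nz: "X \<noteq> 0" and np: "\<And>c. Y \<noteq> csc c X"
  shows "\<not> graded_iso n S r \<phi>"
proof
  assume g: "graded_iso n S r \<phi>"
  have gg: "(\<forall>x\<in>free_nil3 r. \<forall>y\<in>free_nil3 r. \<phi> (x + y) = \<phi> x + \<phi> y) \<and>
     (\<forall>c. \<forall>x\<in>free_nil3 r. \<phi> (csc c x) = csc c (\<phi> x)) \<and>
     bij_betw \<phi> (free_nil3 r) (neg_part n S) \<and>
     (\<forall>x\<in>free_nil3 r. \<forall>y\<in>free_nil3 r. \<phi> (tbr x y) = mbr n (\<phi> x) (\<phi> y)) \<and>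
     \<phi> ` f1 r = grade n S (-1) \<and>
     \<phi> ` f2 r = grade n S (-2) \<and>
     \<phi> ` f3 r = grade n S (-3)" using g unfolding graded_iso_def .
  have add: "\<And>x y. x \<in> free_nil3 r \<Longrightarrow> y \<in> free_nil3 r \<Longrightarrow> \<phi> (x + y) = \<phi> x + \<phi> y"
    using gg[THEN conjunct1] by simp
  have sc: "\<And>c x. x \<in> free_nil3 r \<Longrightarrow> \<phi> (csc c x) = csc c (\<phi> x)"
    using gg[THEN conjunct2, THEN conjunct1] by simp
  have inj: "inj_on \<phi> (free_nil3 r)"
    using gg[THEN conjunct2, THEN conjunct2, THEN conjunct1] by (rule bij_betw_imp_inj_on)
  have hom: "\<And>x y. x \<in> free_nil3 r \<Longrightarrow> y \<in> free_nil3 r \<Longrightarrow> \<phi> (tbr x y) = mbr n (\<phi> x) (\<phi> y)"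
    using gg[THEN conjunct2, THEN conjunct2, THEN conjunct2, THEN conjunct1] by simp
  have im: "\<phi> ` f1 r = grade n S (-1)"
    using gg[THEN conjunct2, THEN conjunct2, THEN conjunct2, THEN conjunct2, THEN conjunct1] .
  obtain x where x: "x \<in> f1 r" "\<phi> x = X" using X im by (metis imageE)
  obtain y where y: "y \<in> f1 r" "\<phi> y = Y" using Y im by (metis imageE)
  have sub: "f1 r \<subseteq> free_nil3 r" unfolding free_nil3_def by (auto intro: cspan_base)
  have z0: "(0::tens) \<in> free_nil3 r" unfolding free_nil3_def by (rule cspan_0)
  have p0: "\<phi> 0 = 0"
  proof -
    have "\<phi> (0 + 0) = \<phi> 0 + \<phi> 0" using add[OF z0 z0] .
    then show ?thesis by simp
  qed
  have t: "tbr x y \<in> free_nil3 r" using tbr_f1_in x y by blast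
  have "\<phi> (tbr x y) = \<phi> 0" using hom[of x y] x y sub c p0 by auto
  then have t0: "tbr x y = 0" using inj_onD[OF inj _ t z0] by blast
  have xnz: "x \<noteq> 0" using x nz p0 by auto
  obtain k where "y = csc k x" using f1_dep[OF x(1) y(1) t0 xnz] by blast
  then have "Y = csc k X" using y x sc[of x k] sub by auto
  then show False using np by blast
qed

theorem theorem4p7:
  fixes n i r :: nat
  assumes "n \<ge> 3" and "1 \<le> i" and "i < n" and "r > 0"
  shows "\<not> (\<exists>\<phi>. graded_iso n {i, n} r \<phi>)"
proof
  assume "\<exists>\<phi>. graded_iso n {i, n} r \<phi>"
  then obtain \<phi> where g: "graded_iso n {i, n} r \<phi>" by blast
  have X: "Rv n 1 n \<in> grade n {i, n} (-1)" using assms by (intro Rv_grade) auto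
  show False
  proof (cases "i = 1")
    case True
    have Y: "Rv n 1 (n-1) \<in> grade n {i, n} (-1)" using assms True by (intro Rv_grade) auto
    show False using no_iso_generic[OF X Y Rv_comm1[OF assms(1)] Rv_nz1[OF assms(1)] Rv_np1[OF assms(1)]] g by (rule notE)
  next
    case False
    have Y: "Rv n 2 n \<in> grade n {i, n} (-1)" using assms False by (intro Rv_grade) auto
    show False using no_iso_generic[OF X Y Rv_comm2[OF assms(1)] Rv_nz1[OF assms(1)] Rv_np2[OF assms(1)]] g by (rule notE)
  qed
qed


end
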